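(* Let $p_1,\dots,p_r,q_1,\dots,q_s$ be positive integers with $\sum_ip_i=\sum_jq_j$ and $\gcd(p_1,\dots,p_r,q_1,\dots,q_s)=1$, let $q$ be a prime power and $\lambda\in\mathbb{F}_q^\times$. Then $$|V_\lambda(\mathbb{F}_q^\times)|=\frac{(q-1)^{r+s-2}}{q}+\frac{1}{q(q-1)}\sum_{m=0}^{q-2}\prod_{i=1}^rg(p_im)\prod_{j=1}^sg(-q_jm)\,\omega(\epsilon\lambda)^m,$$ where $\epsilon=(-1)^{q_1+\cdots+q_s}$.
   Context: Fix a nontrivial additive character $\psi_q$ of $\mathbb{F}_q$, a generator $\omega$ of the character group of $\mathbb{F}_q^\times$, and $g(m)=\sum_{x\in\mathbb{F}_q^\times}\omega(x)^m\psi_q(x)$. $V_\lambda(\mathbb{F}_q^\times)$ denotes the set of points $(x_1:\dots:x_r:y_1:\dots:y_s)\in\mathbb{P}^{r+s-1}(\mathbb{F}_q)$ with all coordinates nonzero satisfying $x_1+\cdots+x_r-y_1-\cdots-y_s=0$ and $\lambda x_1^{p_1}\cdots x_r^{p_r}=y_1^{q_1}\cdots y_s^{q_s}$. *)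

theory Defs
  imports Complex_Main
begin

definition gsum :: "('a::{field,finite} \<Rightarrow> complex) \<Rightarrow> ('a \<Rightarrow> complex) \<Rightarrow> int \<Rightarrow> complex" where
  "gsum \<psi> \<omega> m = (\<Sum>x\<in>UNIV - {0}. (\<omega> x) powi m * \<psi> x)"

text \<open>Affine representatives: a list z of length r+s with all entries nonzero;
  x_i = z!i (i<r), y_j = z!(r+j) (j<s).\<close>
definition V_aff :: "'a::{field,finite} \<Rightarrow> nat list \<Rightarrow> nat list \<Rightarrow> 'a list set" where
  "V_aff lam ps qs = {z. length z = length ps + length qs \<and> (\<forall>a\<in>set z. a \<noteq> 0)
      \<and> (\<Sum>i<length ps. z!i) - (\<Sum>j<length qs. z!(length ps + j)) = 0
      \<and> lam * (\<Prod>i<length ps. (z!i) ^ (ps!i)) = (\<Prod>j<length qs. (z!(length ps + j)) ^ (qs!j))}"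

definition proj_pt :: "'a::field list \<Rightarrow> 'a list set" where
  "proj_pt z = {map (\<lambda>a. c * a) z | c. c \<noteq> 0}"

definition V_lambda :: "'a::{field,finite} \<Rightarrow> nat list \<Rightarrow> nat list \<Rightarrow> 'a list set set" where
  "V_lambda lam ps qs = proj_pt ` V_aff lam ps qs"

end

theory Submission
  imports Defs
begin


lemma psi_zero:
  fixes \<psi> :: "'a::field \<Rightarrow> complex"
  assumes psi_add: "\<forall>x y. \<psi> (x + y) = \<psi> x * \<psi> y" and psi_nz: "\<forall>x. \<psi> x \<noteq> 0"
  shows "\<psi> 0 = 1"
proof -
  have "\<psi> 0 = \<psi> 0 * \<psi> 0" using psi_add by (metis add_0)
  thus ?thesis using psi_nz by (metis mult_cancel_left1)
qed

lemma psi_sum: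
  fixes \<psi> :: "'a::field \<Rightarrow> complex"
  assumes psi_add: "\<forall>x y. \<psi> (x + y) = \<psi> x * \<psi> y" and psi_nz: "\<forall>x. \<psi> x \<noteq> 0"
  shows "\<psi> (sum f A) = (\<Prod>i\<in>A. \<psi> (f i))"
proof (induction A rule: infinite_finite_induct)
  case (infinite A) then show ?case using psi_zero[OF assms] by simp
next
  case empty then show ?case using psi_zero[OF assms] by simp
next
  case (insert x F) then show ?case using psi_add by simp
qed

lemma psi_total:
  fixes \<psi> :: "'a::{field,finite} \<Rightarrow> complex"
  assumes psi_add: "\<forall>x y. \<psi> (x + y) = \<psi> x * \<psi> y" and psi_nontriv: "\<exists>x. \<psi> x \<noteq> 1"
  shows "(\<Sum>x\<in>UNIV. \<psi> x) = 0"
proof -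
  obtain c where c: "\<psi> c \<noteq> 1" using psi_nontriv by blast
  have "(\<Sum>x\<in>UNIV. \<psi> x) = (\<Sum>x\<in>UNIV. \<psi> (x + c))"
    by (rule sum.reindex_bij_witness[where i="\<lambda>x. x + c" and j="\<lambda>x. x - c"]) auto
  also have "\<dots> = \<psi> c * (\<Sum>x\<in>UNIV. \<psi> x)" using psi_add by (simp add: sum_distrib_left mult.commute)
  finally have "(\<psi> c - 1) * (\<Sum>x\<in>UNIV. \<psi> x) = 0" by (simp add: algebra_simps)
  thus ?thesis using c by simp
qed

lemma psi_orth:
  fixes \<psi> :: "'a::{field,finite} \<Rightarrow> complex"
  assumes psi_add: "\<forall>x y. \<psi> (x + y) = \<psi> x * \<psi> y" and psi_nz: "\<forall>x. \<psi> x \<noteq> 0"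
    and psi_nontriv: "\<exists>x. \<psi> x \<noteq> 1"
  shows "(\<Sum>t\<in>UNIV. \<psi> (t * a)) = (if a = 0 then of_nat (card (UNIV::'a set)) else 0)"
proof (cases "a = 0")
  case True then show ?thesis using psi_zero[OF psi_add psi_nz] by simp
next
  case False
  have "(\<Sum>t\<in>UNIV. \<psi> (t * a)) = (\<Sum>x\<in>UNIV. \<psi> x)"
    by (rule sum.reindex_bij_witness[where i="\<lambda>x. x / a" and j="\<lambda>x. x * a"]) (use False in auto)
  then show ?thesis using psi_total[OF psi_add psi_nontriv] False by simp
qed

lemma omega_one:
  fixes \<omega> :: "'a::field \<Rightarrow> complex"
  assumes omega_mult: "\<forall>x y. x \<noteq> 0 \<longrightarrow> y \<noteq> 0 \<longrightarrow> \<omega> (x * y) = \<omega> x * \<omega> y"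
    and omega_nz: "\<forall>x. x \<noteq> 0 \<longrightarrow> \<omega> x \<noteq> 0"
  shows "\<omega> 1 = 1"
proof -
  have "\<omega> 1 = \<omega> 1 * \<omega> 1" using omega_mult by (metis mult_1 one_neq_zero)
  thus ?thesis using omega_nz by (metis mult_cancel_left1 one_neq_zero)
qed

lemma omega_prod:
  fixes \<omega> :: "'a::field \<Rightarrow> complex"
  assumes omega_mult: "\<forall>x y. x \<noteq> 0 \<longrightarrow> y \<noteq> 0 \<longrightarrow> \<omega> (x * y) = \<omega> x * \<omega> y"
    and omega_nz: "\<forall>x. x \<noteq> 0 \<longrightarrow> \<omega> x \<noteq> 0"
  shows "(\<forall>i\<in>A. f i \<noteq> 0) \<Longrightarrow> \<omega> (prod f A) = (\<Prod>i\<in>A. \<omega> (f i))"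
proof (induction A rule: infinite_finite_induct)
  case (infinite A) then show ?case using omega_one[OF assms] by simp
next
  case empty then show ?case using omega_one[OF assms] by simp
next
  case (insert x F)
  then have "prod f F \<noteq> 0" by (simp add: prod_zero_iff)
  then show ?case using insert omega_mult by simp
qed

lemma omega_pow:
  fixes \<omega> :: "'a::field \<Rightarrow> complex"
  assumes omega_mult: "\<forall>x y. x \<noteq> 0 \<longrightarrow> y \<noteq> 0 \<longrightarrow> \<omega> (x * y) = \<omega> x * \<omega> y"
    and omega_nz: "\<forall>x. x \<noteq> 0 \<longrightarrow> \<omega> x \<noteq> 0"
  shows "x \<noteq> 0 \<Longrightarrow> \<omega> (x ^ k) = \<omega> x ^ k"
  using omega_prod[OF assms, of "{..<k}" "\<lambda>_. x"] by simp

lemma omega_inverse: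
  fixes \<omega> :: "'a::field \<Rightarrow> complex"
  assumes omega_mult: "\<forall>x y. x \<noteq> 0 \<longrightarrow> y \<noteq> 0 \<longrightarrow> \<omega> (x * y) = \<omega> x * \<omega> y"
    and omega_nz: "\<forall>x. x \<noteq> 0 \<longrightarrow> \<omega> x \<noteq> 0"
  shows "x \<noteq> 0 \<Longrightarrow> \<omega> (inverse x) = inverse (\<omega> x)"
proof -
  assume x: "x \<noteq> 0"
  have "\<omega> (inverse x) * \<omega> x = 1" using omega_mult[rule_format, of "inverse x" x] x omega_one[OF assms]
    by simp
  thus ?thesis by (metis inverse_unique mult.commute)
qed

lemma omega_inj:
  fixes \<omega> :: "'a::{field,finite} \<Rightarrow> complex"
  assumes omega_mult: "\<forall>x y. x \<noteq> 0 \<longrightarrow> y \<noteq> 0 \<longrightarrow> \<omega> (x * y) = \<omega> x * \<omega> y"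
    and omega_nz: "\<forall>x. x \<noteq> 0 \<longrightarrow> \<omega> x \<noteq> 0"
    and omega_gen: "\<forall>k::nat. (\<forall>x. x \<noteq> 0 \<longrightarrow> \<omega> x ^ k = 1) \<longleftrightarrow> ((card (UNIV::'a set)) - 1) dvd k"
  shows "inj_on \<omega> (UNIV - {0})"
proof -
  let ?U = "UNIV - {0::'a}"
  let ?H = "\<omega> ` ?U"
  have finH: "finite ?H" by simp
  have Hnz: "\<forall>h\<in>?H. h \<noteq> 0" using omega_nz by auto
  have Hmul: "\<And>h g. h \<in> ?H \<Longrightarrow> g \<in> ?H \<Longrightarrow> h * g \<in> ?H"
  proof -
    fix h g assume "h \<in> ?H" "g \<in> ?H"
    then obtain x y where "x \<noteq> 0" "y \<noteq> 0" "h = \<omega> x" "g = \<omega> y" by auto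
    then show "h * g \<in> ?H" using omega_mult by (metis DiffI UNIV_I image_eqI mult_eq_0_iff singletonD)
  qed
  have pw: "h ^ card ?H = 1" if h: "h \<in> ?H" for h
  proof -
    have injh: "inj_on ((*) h) ?H" using Hnz h by (auto simp: inj_on_def)
    have img: "(*) h ` ?H = ?H"
    proof -
      have "(*) h ` ?H \<subseteq> ?H" using Hmul h by auto
      moreover have "card ((*) h ` ?H) = card ?H" using card_image[OF injh] .
      ultimately show ?thesis using finH by (metis card_subset_eq)
    qed
    have "(\<Prod>g\<in>?H. g) = (\<Prod>g\<in>(*) h ` ?H. g)" using img by simp
    also have "\<dots> = (\<Prod>g\<in>?H. h * g)" using prod.reindex[OF injh] by simp
    also have "\<dots> = h ^ card ?H * (\<Prod>g\<in>?H. g)" by (simp add: prod.distrib)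
    finally have "(h ^ card ?H - 1) * (\<Prod>g\<in>?H. g) = 0" by (simp add: algebra_simps)
    moreover have "(\<Prod>g\<in>?H. g) \<noteq> 0" using omega_nz finH by (auto simp: prod_zero_iff)
    ultimately show ?thesis by simp
  qed
  have "\<forall>x. x \<noteq> 0 \<longrightarrow> \<omega> x ^ card ?H = 1" using pw by auto
  then have dv: "(card (UNIV::'a set) - 1) dvd card ?H" using omega_gen by blast
  have cU: "card ?U = card (UNIV::'a set) - 1" by (simp add: card_Diff_singleton)
  have le: "card ?H \<le> card ?U" by (rule card_image_le) simp
  have "(1::'a) \<in> ?U" by simp
  then have "\<omega> 1 \<in> ?H" by (rule imageI)
  then have pos: "card ?H > 0" using finH card_gt_0_iff by blast
  have "card ?H = card ?U" using dv le pos cU by (metis dvd_imp_le le_antisym)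
  thus ?thesis by (intro eq_card_imp_inj_on) auto
qed

lemma root_sum:
  fixes w :: complex
  assumes "w ^ n = 1" "n > 0"
  shows "(\<Sum>m<n. w ^ m) = (if w = 1 then of_nat n else 0)"
  using assms by (auto simp: geometric_sum)



lemma char_sum:
  fixes \<omega> :: "'a::{field,finite} \<Rightarrow> complex"
  assumes omega_mult: "\<forall>x y. x \<noteq> 0 \<longrightarrow> y \<noteq> 0 \<longrightarrow> \<omega> (x * y) = \<omega> x * \<omega> y"
    and omega_nz: "\<forall>x. x \<noteq> 0 \<longrightarrow> \<omega> x \<noteq> 0"
  shows "(\<Sum>a\<in>UNIV - {0}. \<omega> a powi k) =
     (if \<forall>x. x \<noteq> 0 \<longrightarrow> \<omega> x powi k = 1 then of_nat (card (UNIV::'a set) - 1) else 0)"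
proof (cases "\<forall>x. x \<noteq> 0 \<longrightarrow> \<omega> x powi k = 1")
  case True
  then have "(\<Sum>a\<in>UNIV - {0}. \<omega> a powi k) = (\<Sum>a\<in>UNIV - {0::'a}. 1)" by (intro sum.cong) auto
  then show ?thesis using True by (simp add: card_Diff_singleton)
next
  case False
  then obtain c where c: "c \<noteq> 0" "\<omega> c powi k \<noteq> 1" by blast
  have "(\<Sum>a\<in>UNIV - {0}. \<omega> a powi k) = (\<Sum>a\<in>UNIV - {0}. \<omega> (c * a) powi k)"
    by (rule sum.reindex_bij_witness[where i="\<lambda>x. c * x" and j="\<lambda>x. x / c"]) (use c in auto)
  also have "\<dots> = (\<Sum>a\<in>UNIV - {0}. \<omega> c powi k * \<omega> a powi k)"
    by (intro sum.cong) (use c omega_mult in \<open>auto simp: power_int_mult_distrib\<close>)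
  also have "\<dots> = \<omega> c powi k * (\<Sum>a\<in>UNIV - {0}. \<omega> a powi k)" by (simp add: sum_distrib_left)
  finally have "(\<omega> c powi k - 1) * (\<Sum>a\<in>UNIV - {0}. \<omega> a powi k) = 0" by (simp add: algebra_simps)
  then have s0: "(\<Sum>a\<in>UNIV - {0}. \<omega> a powi k) = 0" using c by simp
  show ?thesis by (subst if_not_P[OF False]) (rule s0)
qed

lemma triv_pos:
  fixes \<omega> :: "'a::{field,finite} \<Rightarrow> complex"
  assumes omega_gen: "\<forall>k::nat. (\<forall>x. x \<noteq> 0 \<longrightarrow> \<omega> x ^ k = 1) \<longleftrightarrow> ((card (UNIV::'a set)) - 1) dvd k"
  shows "(\<forall>x. x \<noteq> 0 \<longrightarrow> \<omega> x powi (int a * int m) = 1) \<longleftrightarrow> (card (UNIV::'a set) - 1) dvd (a * m)"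
proof -
  have "\<And>x. \<omega> x powi (int a * int m) = \<omega> x ^ (a * m)"
    by (metis of_nat_mult power_int_of_nat)
  then show ?thesis using omega_gen by simp
qed

lemma triv_neg:
  fixes \<omega> :: "'a::{field,finite} \<Rightarrow> complex"
  assumes omega_gen: "\<forall>k::nat. (\<forall>x. x \<noteq> 0 \<longrightarrow> \<omega> x ^ k = 1) \<longleftrightarrow> ((card (UNIV::'a set)) - 1) dvd k"
  shows "(\<forall>x. x \<noteq> 0 \<longrightarrow> \<omega> x powi (- int a * int m) = 1) \<longleftrightarrow> (card (UNIV::'a set) - 1) dvd (a * m)"
proof -
  have "\<And>x. \<omega> x powi (- int a * int m) = inverse (\<omega> x ^ (a * m))"
    by (metis minus_mult_left of_nat_mult power_int_minus power_int_of_nat)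
  then show ?thesis using omega_gen by (simp add: inverse_eq_1_iff)
qed

lemma gauss_shift:
  fixes \<omega> \<psi> :: "'a::{field,finite} \<Rightarrow> complex"
  assumes omega_mult: "\<forall>x y. x \<noteq> 0 \<longrightarrow> y \<noteq> 0 \<longrightarrow> \<omega> (x * y) = \<omega> x * \<omega> y"
    and omega_nz: "\<forall>x. x \<noteq> 0 \<longrightarrow> \<omega> x \<noteq> 0"
    and c: "c \<noteq> 0"
  shows "(\<Sum>a\<in>UNIV - {0}. \<psi> (c * a) * \<omega> a powi k) = \<omega> c powi (- k) * gsum \<psi> \<omega> k"
proof -
  have "gsum \<psi> \<omega> k = (\<Sum>a\<in>UNIV - {0}. \<omega> (c * a) powi k * \<psi> (c * a))"
    unfolding gsum_def
    by (rule sum.reindex_bij_witness[where i="\<lambda>x. c * x" and j="\<lambda>x. x / c"]) (use c in auto)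
  also have "\<dots> = \<omega> c powi k * (\<Sum>a\<in>UNIV - {0}. \<psi> (c * a) * \<omega> a powi k)"
    unfolding sum_distrib_left
    by (intro sum.cong) (use c omega_mult in \<open>auto simp: power_int_mult_distrib\<close>)
  finally have "\<omega> c powi (- k) * gsum \<psi> \<omega> k = \<omega> c powi (- k) * \<omega> c powi k * (\<Sum>a\<in>UNIV - {0}. \<psi> (c * a) * \<omega> a powi k)"
    by simp
  also have "\<omega> c powi (- k) * \<omega> c powi k = 1" using c omega_nz
    by (simp add: power_int_minus field_simps power_int_not_zero)
  finally show ?thesis by simp
qed

lemma list_prod_sum:
  fixes f :: "nat \<Rightarrow> 'a \<Rightarrow> 'b::comm_semiring_1"
  assumes "finite U"
  shows "(\<Sum>z\<in>{z. set z \<subseteq> U \<and> length z = N}. \<Prod>i<N. f i (z!i)) = (\<Prod>i<N. \<Sum>a\<in>U. f i a)"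
proof (induction N arbitrary: f)
  case 0
  have "{z. set z \<subseteq> U \<and> length z = 0} = {[]}" by auto
  then show ?case by simp
next
  case (Suc N)
  have eq: "{z. set z \<subseteq> U \<and> length z = Suc N} = (\<lambda>(a, z). a # z) ` (U \<times> {z. set z \<subseteq> U \<and> length z = N})"
    by (auto simp: length_Suc_conv image_iff)
  have inj: "inj_on (\<lambda>(a, z). a # z) (U \<times> {z. set z \<subseteq> U \<and> length z = N})"
    by (auto simp: inj_on_def)
  have "(\<Sum>z\<in>{z. set z \<subseteq> U \<and> length z = Suc N}. \<Prod>i<Suc N. f i (z!i))
     = (\<Sum>(a, z)\<in>U \<times> {z. set z \<subseteq> U \<and> length z = N}. \<Prod>i<Suc N. f i ((a # z)!i))"
    unfolding eq by (subst sum.reindex[OF inj]) (simp add: case_prod_unfold)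
  also have "\<dots> = (\<Sum>(a, z)\<in>U \<times> {z. set z \<subseteq> U \<and> length z = N}. f 0 a * (\<Prod>i<N. f (Suc i) (z!i)))"
    by (intro sum.cong refl) (clarsimp simp del: prod.lessThan_Suc simp add: prod.lessThan_Suc_shift)
  also have "\<dots> = (\<Sum>a\<in>U. \<Sum>z\<in>{z. set z \<subseteq> U \<and> length z = N}. f 0 a * (\<Prod>i<N. f (Suc i) (z!i)))"
    by (rule sum.cartesian_product[symmetric])
  also have "\<dots> = (\<Sum>a\<in>U. f 0 a) * (\<Prod>i<N. \<Sum>a\<in>U. f (Suc i) a)"
    by (simp add: sum_distrib_left[symmetric] sum_distrib_right Suc.IH[of "\<lambda>i. f (Suc i)"])
  also have "\<dots> = (\<Prod>i<Suc N. \<Sum>a\<in>U. f i a)" by (simp del: prod.lessThan_Suc add: prod.lessThan_Suc_shift)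
  finally show ?case .
qed

lemma split_prod:
  fixes f :: "nat \<Rightarrow> 'b::comm_monoid_mult"
  shows "(\<Prod>i<r + s. f i) = (\<Prod>i<r. f i) * (\<Prod>j<s. f (r + j))"
  by (induction s) (simp_all add: mult.assoc)

lemma split_sum:
  fixes f :: "nat \<Rightarrow> 'b::comm_monoid_add"
  shows "(\<Sum>i<r + s. f i) = (\<Sum>i<r. f i) + (\<Sum>j<s. f (r + j))"
  by (induction s) (simp_all add: add.assoc)

lemma gcd_arg:
  fixes d m :: nat
  assumes "\<forall>a\<in>S. d dvd a * m" "Gcd S = 1"
  shows "d dvd m"
proof -
  have "d dvd Gcd ((\<lambda>a. a * m) ` S)" using assms(1) by (auto simp: dvd_Gcd_iff)
  also have "(\<lambda>a. a * m) ` S = (*) m ` S" by (auto simp: mult.commute)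
  also have "Gcd ((*) m ` S) = m" using assms(2) by (simp add: Gcd_mult)
  finally show ?thesis .
qed



lemma sum_list_lt: "sum_list xs = (\<Sum>i<length xs. xs!i)"
  by (simp add: sum_list_sum_nth atLeast0LessThan)

lemma scale_mem:
  fixes lam c :: "'a::{field,finite}"
  assumes sums: "sum_list ps = sum_list qs" and z: "z \<in> V_aff lam ps qs" and c: "c \<noteq> 0"
  shows "map ((*) c) z \<in> V_aff lam ps qs"
proof -
  let ?r = "length ps" and ?s = "length qs"
  have len: "length z = ?r + ?s" and nz: "\<forall>a\<in>set z. a \<noteq> 0"
    and eq1: "(\<Sum>i<?r. z!i) - (\<Sum>j<?s. z!(?r + j)) = 0"
    and eq2: "lam * (\<Prod>i<?r. (z!i) ^ (ps!i)) = (\<Prod>j<?s. (z!(?r + j)) ^ (qs!j))"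
    using z unfolding V_aff_def by auto
  let ?w = "map ((*) c) z"
  have s1: "(\<Sum>i<?r. ?w!i) = c * (\<Sum>i<?r. z!i)"
    by (simp add: sum_distrib_left len)
  have s2: "(\<Sum>j<?s. ?w!(?r + j)) = c * (\<Sum>j<?s. z!(?r + j))"
    by (simp add: sum_distrib_left len)
  have p1: "(\<Prod>i<?r. (?w!i) ^ (ps!i)) = c ^ sum_list ps * (\<Prod>i<?r. (z!i) ^ (ps!i))"
    by (simp add: len power_mult_distrib prod.distrib power_sum sum_list_lt)
  have p2: "(\<Prod>j<?s. (?w!(?r + j)) ^ (qs!j)) = c ^ sum_list qs * (\<Prod>j<?s. (z!(?r + j)) ^ (qs!j))"
    by (simp add: len power_mult_distrib prod.distrib power_sum sum_list_lt)
  have "(\<Sum>i<?r. ?w!i) - (\<Sum>j<?s. ?w!(?r + j)) = 0"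
    unfolding s1 s2 using eq1 by (simp add: right_diff_distrib[symmetric])
  moreover have "lam * (\<Prod>i<?r. (?w!i) ^ (ps!i)) = (\<Prod>j<?s. (?w!(?r + j)) ^ (qs!j))"
    unfolding p1 p2 using eq2 sums by (simp add: mult.left_commute)
  moreover have "\<forall>a\<in>set ?w. a \<noteq> 0" using nz c by auto
  ultimately show ?thesis unfolding V_aff_def using len by simp
qed

lemma proj_pt_scale:
  fixes a :: "'a::field"
  assumes a: "a \<noteq> 0"
  shows "proj_pt (map ((*) a) z) = proj_pt z"
proof -
  have "proj_pt (map ((*) a) z) = {map (\<lambda>x. (c * a) * x) z | c. c \<noteq> 0}"
    unfolding proj_pt_def by (simp add: comp_def mult.assoc)
  also have "\<dots> = {map (\<lambda>x. c * x) z | c. c \<noteq> 0}"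
  proof (intro equalityI subsetI)
    fix w assume "w \<in> {map (\<lambda>x. (c * a) * x) z | c. c \<noteq> 0}"
    then obtain c where "c \<noteq> 0" "w = map (\<lambda>x. (c * a) * x) z" by auto
    then show "w \<in> {map (\<lambda>x. c * x) z | c. c \<noteq> 0}" using a by auto
  next
    fix w assume "w \<in> {map (\<lambda>x. c * x) z | c. c \<noteq> 0}"
    then obtain c where c: "c \<noteq> 0" "w = map (\<lambda>x. c * x) z" by auto
    then have "w = map (\<lambda>x. ((c / a) * a) * x) z" using a by simp
    moreover have "c / a \<noteq> 0" using a c by simp
    ultimately show "w \<in> {map (\<lambda>x. (c * a) * x) z | c. c \<noteq> 0}" by blast
  qed
  finally show ?thesis unfolding proj_pt_def by simp
qed

lemma proj_card:
  fixes z :: "'a::{field,finite} list"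
  assumes "z \<noteq> []" "\<forall>x\<in>set z. x \<noteq> 0"
  shows "card (proj_pt z) = card (UNIV::'a set) - 1"
proof -
  have eq: "proj_pt z = (\<lambda>c. map ((*) c) z) ` (UNIV - {0})"
    unfolding proj_pt_def by auto
  have h0: "hd z \<noteq> 0" using assms by simp
  have "inj_on (\<lambda>c. map ((*) c) z) (UNIV - {0})"
  proof (rule inj_onI)
    fix c d assume "map ((*) c) z = map ((*) d) z"
    then have "hd (map ((*) c) z) = hd (map ((*) d) z)" by (rule arg_cong)
    then have "c * hd z = d * hd z" using assms(1) by (simp add: hd_map)
    then show "c = d" using h0 by simp
  qed
  then show ?thesis unfolding eq by (simp add: card_image card_Diff_singleton)
qed

lemma card_Vaff:
  fixes lam :: "'a::{field,finite}"
  assumes sums: "sum_list ps = sum_list qs" and ne: "length ps + length qs \<ge> 1"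
  shows "card (V_aff lam ps qs) = (card (UNIV::'a set) - 1) * card (V_lambda lam ps qs)"
proof -
  let ?V = "V_aff lam ps qs"
  have fin: "finite ?V"
  proof (rule finite_subset)
    show "?V \<subseteq> {z. set z \<subseteq> (UNIV::'a set) \<and> length z = length ps + length qs}"
      unfolding V_aff_def by auto
  qed (rule finite_lists_length_eq, simp)
  have union: "\<Union>(V_lambda lam ps qs) = ?V"
  proof (intro equalityI subsetI)
    fix w assume "w \<in> \<Union>(V_lambda lam ps qs)"
    then obtain z where z: "z \<in> ?V" "w \<in> proj_pt z" unfolding V_lambda_def by auto
    then obtain c where "c \<noteq> 0" "w = map (\<lambda>a. c * a) z" unfolding proj_pt_def by auto
    then show "w \<in> ?V" using scale_mem[OF sums z(1)] by (simp add: comp_def)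
  next
    fix w assume w: "w \<in> ?V"
    have "w = map (\<lambda>a. 1 * a) w" by (induction w) simp_all
    then have "w = map (\<lambda>a. 1 * a) w \<and> (1::'a) \<noteq> 0" using one_neq_zero by (rule conjI)
    then have "\<exists>c. w = map (\<lambda>a. c * a) w \<and> c \<noteq> 0" by (rule exI)
    then have ww: "w \<in> proj_pt w" unfolding proj_pt_def mem_Collect_eq .
    show "w \<in> \<Union>(V_lambda lam ps qs)" unfolding V_lambda_def by (rule UnionI[OF imageI[of w _ proj_pt, OF w] ww])
  qed
  have cards: "\<forall>c\<in>V_lambda lam ps qs. card c = card (UNIV::'a set) - 1"
  proof
    fix c assume "c \<in> V_lambda lam ps qs"
    then obtain z where z: "z \<in> ?V" "c = proj_pt z" unfolding V_lambda_def by auto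
    then have zz: "z \<noteq> []" "\<forall>x\<in>set z. x \<noteq> 0" using ne unfolding V_aff_def by auto
    show "card c = card (UNIV::'a set) - 1" unfolding z(2) by (rule proj_card[OF zz])
  qed
  have disj: "\<forall>c1\<in>V_lambda lam ps qs. \<forall>c2\<in>V_lambda lam ps qs. c1 \<noteq> c2 \<longrightarrow> c1 \<inter> c2 = {}"
  proof (intro ballI impI)
    fix c1 c2 assume c1: "c1 \<in> V_lambda lam ps qs" and c2: "c2 \<in> V_lambda lam ps qs" and ne: "c1 \<noteq> c2"
    obtain z1 where z1: "c1 = proj_pt z1" using c1 unfolding V_lambda_def by auto
    obtain z2 where z2: "c2 = proj_pt z2" using c2 unfolding V_lambda_def by auto
    show "c1 \<inter> c2 = {}"
    proof (rule ccontr)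
      assume "c1 \<inter> c2 \<noteq> {}"
      then obtain w where "w \<in> proj_pt z1" "w \<in> proj_pt z2" using z1 z2 by auto
      then obtain a b where ab: "a \<noteq> 0" "b \<noteq> 0" "w = map ((*) a) z1" "w = map ((*) b) z2"
        unfolding proj_pt_def by auto
      have "proj_pt z1 = proj_pt w" using proj_pt_scale[OF ab(1)] ab(3) by simp
      also have "\<dots> = proj_pt z2" using proj_pt_scale[OF ab(2)] ab(4) by simp
      finally show False using ne z1 z2 by simp
    qed
  qed
  have finL: "finite (V_lambda lam ps qs)" unfolding V_lambda_def using fin by simp
  have "(card (UNIV::'a set) - 1) * card (V_lambda lam ps qs) = card (\<Union>(V_lambda lam ps qs))"
    by (rule card_partition[OF finL _ cards[rule_format] disj[rule_format]]) (simp add: union fin)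
  then show ?thesis using union by simp
qed



locale setting =
  fixes \<psi> \<omega> :: "'a::{field,finite} \<Rightarrow> complex"
    and ps qs :: "nat list" and lam :: 'a
  assumes psi_add: "\<forall>x y. \<psi> (x + y) = \<psi> x * \<psi> y"
    and psi_nz: "\<forall>x. \<psi> x \<noteq> 0"
    and psi_nontriv: "\<exists>x. \<psi> x \<noteq> 1"
    and omega_mult: "\<forall>x y. x \<noteq> 0 \<longrightarrow> y \<noteq> 0 \<longrightarrow> \<omega> (x * y) = \<omega> x * \<omega> y"
    and omega_nz: "\<forall>x. x \<noteq> 0 \<longrightarrow> \<omega> x \<noteq> 0"
    and omega_gen: "\<forall>k::nat. (\<forall>x. x \<noteq> 0 \<longrightarrow> \<omega> x ^ k = 1) \<longleftrightarrow> ((card (UNIV::'a set)) - 1) dvd k"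
    and ps_pos: "\<forall>a\<in>set ps. a > 0"
    and qs_pos: "\<forall>b\<in>set qs. b > 0"
    and sums: "sum_list ps = sum_list qs"
    and gcd1: "Gcd (set (ps @ qs)) = 1"
    and lam_nz: "lam \<noteq> 0"
begin

abbreviation "r \<equiv> length ps"
abbreviation "s \<equiv> length qs"
abbreviation "N \<equiv> length ps + length qs"
abbreviation "L \<equiv> {z. set z \<subseteq> (UNIV - {0::'a}) \<and> length z = N}"

definition sg :: "nat \<Rightarrow> 'a" where "sg i = (if i < r then 1 else -1)"
definition e :: "nat \<Rightarrow> int" where "e i = (if i < r then int (ps!i) else - int (qs!(i - r)))"
definition A :: "'a list \<Rightarrow> 'a" where "A z = (\<Sum>i<N. sg i * z!i)"
definition Bc :: "'a list \<Rightarrow> bool" where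
  "Bc z \<longleftrightarrow> lam * (\<Prod>i<r. (z!i) ^ (ps!i)) = (\<Prod>j<s. (z!(r + j)) ^ (qs!j))"

lemma Q_ge2: "card (UNIV::'a set) \<ge> 2"
proof -
  have "{0::'a, 1} \<subseteq> UNIV" by simp
  then have "card {0::'a, 1} \<le> card (UNIV::'a set)" by (rule card_mono[OF finite_UNIV])
  then show ?thesis by simp
qed

lemma card_U: "card (UNIV - {0::'a}) = card (UNIV::'a set) - 1" by (simp add: card_Diff_singleton)

lemma r_pos: "r \<ge> 1"
proof (rule ccontr)
  assume "\<not> r \<ge> 1" then have "ps = []" by (cases ps) auto
  then have "sum_list qs = 0" using sums by simp
  then have "qs = []" using qs_pos by (cases qs) auto
  then show False using gcd1 \<open>ps = []\<close> by simp
qed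

lemma s_pos: "s \<ge> 1"
proof (rule ccontr)
  assume "\<not> s \<ge> 1" then have "qs = []" by (cases qs) auto
  then have "sum_list ps = 0" using sums by simp
  then have "ps = []" using ps_pos by (cases ps) auto
  then show False using gcd1 \<open>qs = []\<close> by simp
qed

lemma finL: "finite L" using finite_lists_length_eq[of "UNIV - {0::'a}" N] by simp

lemma Vaff_eq: "V_aff lam ps qs = {z\<in>L. A z = 0 \<and> Bc z}"
proof -
  have Aeq: "A z = (\<Sum>i<r. z!i) - (\<Sum>j<s. z!(r + j))" for z
    unfolding A_def split_sum by (simp add: sg_def sum_negf)
  show ?thesis
  proof (rule set_eqI)
    fix z :: "'a list"
    have "set z \<subseteq> UNIV - {0} \<longleftrightarrow> (\<forall>a\<in>set z. a\<noteq>0)" by auto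
    then show "z \<in> V_aff lam ps qs \<longleftrightarrow> z \<in> {z\<in>L. A z = 0 \<and> Bc z}"
      unfolding V_aff_def Bc_def mem_Collect_eq Aeq by (simp only: conj_assoc conj_commute conj_left_commute)
  qed
qed

lemma ind_A:
  assumes "z \<in> L"
  shows "(if A z = 0 then 1 else 0 :: complex) = 1 / of_nat (card (UNIV::'a set)) * (\<Sum>t\<in>UNIV. \<Prod>i<N. \<psi> ((t * sg i) * z!i))"
proof -
  have "(\<Sum>t\<in>UNIV. \<Prod>i<N. \<psi> ((t * sg i) * z!i)) = (\<Sum>t\<in>UNIV. \<psi> (t * A z))"
    unfolding A_def sum_distrib_left psi_sum[OF psi_add psi_nz] by (simp add: mult.assoc)
  also have "\<dots> = (if A z = 0 then of_nat (card (UNIV::'a set)) else 0)" by (rule psi_orth[OF psi_add psi_nz psi_nontriv])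
  finally show ?thesis by simp
qed

lemma z_nz: "z \<in> L \<Longrightarrow> i < N \<Longrightarrow> z!i \<noteq> 0"
proof -
  assume "z \<in> L" "i < N"
  then have "z!i \<in> set z" "set z \<subseteq> UNIV - {0}" by (auto intro: nth_mem)
  then show "z!i \<noteq> 0" by blast
qed

lemma omega_prod_pow:
  assumes "\<forall>i\<in>I. x i \<noteq> 0"
  shows "\<omega> (\<Prod>i\<in>I. x i ^ k i) = (\<Prod>i\<in>I. \<omega> (x i) ^ k i)"
proof -
  have "\<omega> (\<Prod>i\<in>I. x i ^ k i) = (\<Prod>i\<in>I. \<omega> (x i ^ k i))"
    by (rule omega_prod[OF omega_mult omega_nz]) (use assms in simp)
  also have "\<dots> = (\<Prod>i\<in>I. \<omega> (x i) ^ k i)"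
    by (intro prod.cong refl) (use assms omega_pow[OF omega_mult omega_nz] in simp)
  finally show ?thesis .
qed

lemma omega_root: "x \<noteq> 0 \<Longrightarrow> \<omega> x ^ (card (UNIV::'a set) - 1) = 1"
proof -
  assume x: "x \<noteq> 0"
  have "\<forall>x. x \<noteq> 0 \<longrightarrow> \<omega> x ^ (card (UNIV::'a set) - 1) = 1"
    using spec[OF omega_gen, of "card (UNIV::'a set) - 1"] by simp
  then show ?thesis using x by simp
qed

lemma ind_B:
  assumes zL: "z \<in> L"
  shows "(if Bc z then 1 else 0 :: complex) = 1 / of_nat (card (UNIV::'a set) - 1) *
     (\<Sum>m<card (UNIV::'a set) - 1. \<omega> lam ^ m * (\<Prod>i<N. \<omega> (z!i) powi (e i * int m)))"
proof -
  let ?n = "card (UNIV::'a set) - 1"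
  have n_pos: "?n > 0" using Q_ge2 by simp
  have nz: "\<And>i. i < N \<Longrightarrow> z!i \<noteq> 0" using z_nz[OF zL] .
  define w where "w = \<omega> lam * (\<Prod>i<N. \<omega> (z!i) powi e i)"
  have wm: "w ^ m = \<omega> lam ^ m * (\<Prod>i<N. \<omega> (z!i) powi (e i * int m))" for m
    unfolding w_def by (simp add: power_mult_distrib prod_power_distrib power_int_power')
  have "w ^ ?n = 1"
  proof -
    have "\<omega> (z!i) powi (e i * int ?n) = 1" if "i < N" for i
    proof -
      have "\<omega> (z!i) powi (e i * int ?n) = (\<omega> (z!i) powi int ?n) powi e i"
      proof -
        have "e i * int ?n = int ?n * e i" by simp
        then show ?thesis by (simp only: power_int_mult)
      qed
      also have "\<dots> = 1" using omega_root[OF nz[OF that]] by (simp add: power_int_of_nat)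
      finally show ?thesis .
    qed
    then show ?thesis unfolding wm using omega_root[OF lam_nz] by simp
  qed
  define X where "X = (\<Prod>i<r. (z!i) ^ (ps!i))"
  define Y where "Y = (\<Prod>j<s. (z!(r + j)) ^ (qs!j))"
  have Xnz: "X \<noteq> 0" unfolding X_def using nz by (simp add: prod_zero_iff)
  have Ynz: "Y \<noteq> 0" unfolding Y_def using nz by (simp add: prod_zero_iff)
  have wX: "\<omega> X = (\<Prod>i<r. \<omega> (z!i) ^ (ps!i))" unfolding X_def
    by (rule omega_prod_pow) (use nz in simp)
  have wY: "\<omega> Y = (\<Prod>j<s. \<omega> (z!(r + j)) ^ (qs!j))" unfolding Y_def
    by (rule omega_prod_pow) (use nz in simp)
  have wYnz: "\<omega> Y \<noteq> 0" using omega_nz Ynz by simp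
  have "w = \<omega> lam * (\<Prod>i<r. \<omega> (z!i) powi e i) * (\<Prod>j<s. \<omega> (z!(r + j)) powi e (r + j))"
    unfolding w_def split_prod by (simp add: mult.assoc)
  also have "(\<Prod>i<r. \<omega> (z!i) powi e i) = \<omega> X"
    unfolding wX by (intro prod.cong refl) (simp add: e_def power_int_of_nat)
  also have "(\<Prod>j<s. \<omega> (z!(r + j)) powi e (r + j)) = (\<Prod>j<s. inverse (\<omega> (z!(r + j)) ^ (qs!j)))"
    by (intro prod.cong refl) (simp add: e_def power_int_minus power_int_of_nat)
  also have "\<dots> = inverse (\<omega> Y)" unfolding wY using prod_inversef[of "\<lambda>j. \<omega> (z!(r + j)) ^ (qs!j)"]
    by (simp add: comp_def)
  finally have wXY: "w = \<omega> lam * \<omega> X * inverse (\<omega> Y)" .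
  have "Bc z \<longleftrightarrow> lam * X = Y" unfolding Bc_def X_def Y_def ..
  also have "\<dots> \<longleftrightarrow> \<omega> (lam * X) = \<omega> Y"
  proof
    assume eqw: "\<omega> (lam * X) = \<omega> Y"
    have m1: "lam * X \<in> UNIV - {0}" and m2: "Y \<in> UNIV - {0}" using lam_nz Xnz Ynz by auto
    show "lam * X = Y" by (rule inj_onD[OF omega_inj[OF omega_mult omega_nz omega_gen] eqw m1 m2])
  qed simp
  also have "\<dots> \<longleftrightarrow> \<omega> lam * \<omega> X = \<omega> Y" using omega_mult lam_nz Xnz by simp
  also have "\<dots> \<longleftrightarrow> w = 1" unfolding wXY using wYnz by (auto simp: field_simps)
  finally have Bw: "Bc z \<longleftrightarrow> w = 1" .
  have "(\<Sum>m<?n. \<omega> lam ^ m * (\<Prod>i<N. \<omega> (z!i) powi (e i * int m))) = (\<Sum>m<?n. w ^ m)"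
    unfolding wm ..
  also have "\<dots> = (if w = 1 then of_nat ?n else 0)" by (rule root_sum[OF \<open>w ^ ?n = 1\<close> n_pos])
  finally show ?thesis using Bw n_pos by simp
qed

definition G :: "'a \<Rightarrow> nat \<Rightarrow> nat \<Rightarrow> complex" where
  "G t m i = (\<Sum>a\<in>UNIV - {0}. \<psi> ((t * sg i) * a) * \<omega> a powi (e i * int m))"

lemma aux_frac: "(1 / a * X) * (1 / b * Y) = 1 / (a * b) * (X * Y :: complex)"
  by (simp add: divide_inverse inverse_mult_distrib mult_ac)

lemma card_sum:
  "of_nat (card (V_aff lam ps qs)) = 1 / (of_nat (card (UNIV::'a set)) * of_nat (card (UNIV::'a set) - 1)) *
     (\<Sum>t\<in>UNIV. \<Sum>m<card (UNIV::'a set) - 1. \<omega> lam ^ m * (\<Prod>i<N. G t m i))"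
proof -
  let ?n = "card (UNIV::'a set) - 1"
  let ?P = "\<lambda>t z. \<Prod>i<N. \<psi> ((t * sg i) * z!i)"
  let ?C = "\<lambda>m z. \<omega> lam ^ m * (\<Prod>i<N. \<omega> (z!i) powi (e i * int m))"
  let ?c = "1 / (of_nat (card (UNIV::'a set)) * of_nat ?n) :: complex"
  have "of_nat (card (V_aff lam ps qs)) = (\<Sum>z\<in>{z\<in>L. A z = 0 \<and> Bc z}. 1 :: complex)"
    unfolding Vaff_eq by simp
  also have "\<dots> = (\<Sum>z\<in>L. if A z = 0 \<and> Bc z then 1 else 0)"
    by (rule sum.inter_filter[OF finL])
  also have "\<dots> = (\<Sum>z\<in>L. (if A z = 0 then 1 else 0) * (if Bc z then 1 else 0))"
    by (intro sum.cong refl) simp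
  also have "\<dots> = (\<Sum>z\<in>L. (1 / of_nat (card (UNIV::'a set)) * (\<Sum>t\<in>UNIV. ?P t z)) *
                              (1 / of_nat ?n * (\<Sum>m<?n. ?C m z)))"
    by (intro sum.cong refl) (simp only: ind_A ind_B)
  also have "\<dots> = (\<Sum>z\<in>L. ?c * ((\<Sum>t\<in>UNIV. ?P t z) * (\<Sum>m<?n. ?C m z)))"
    by (intro sum.cong refl) (rule aux_frac)
  also have "\<dots> = (\<Sum>z\<in>L. ?c * (\<Sum>t\<in>UNIV. \<Sum>m<?n. ?P t z * ?C m z))"
    by (simp only: sum_product)
  also have "\<dots> = ?c * (\<Sum>z\<in>L. \<Sum>t\<in>UNIV. \<Sum>m<?n. ?P t z * ?C m z)"
    by (rule sum_distrib_left[symmetric])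
  also have "(\<Sum>z\<in>L. \<Sum>t\<in>UNIV. \<Sum>m<?n. ?P t z * ?C m z) = (\<Sum>t\<in>UNIV. \<Sum>z\<in>L. \<Sum>m<?n. ?P t z * ?C m z)"
    by (rule sum.swap)
  also have "\<dots> = (\<Sum>t\<in>UNIV. \<Sum>m<?n. \<Sum>z\<in>L. ?P t z * ?C m z)"
    by (intro sum.cong refl) (rule sum.swap)
  also have "\<dots> = (\<Sum>t\<in>UNIV. \<Sum>m<?n. \<omega> lam ^ m * (\<Prod>i<N. G t m i))"
  proof (intro sum.cong refl)
    fix t m
    have "(\<Sum>z\<in>L. ?P t z * ?C m z) = (\<Sum>z\<in>L. \<omega> lam ^ m * (\<Prod>i<N. \<psi> ((t * sg i) * z!i) * \<omega> (z!i) powi (e i * int m)))"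
      by (intro sum.cong refl) (simp add: prod.distrib mult.assoc mult.left_commute)
    also have "\<dots> = \<omega> lam ^ m * (\<Sum>z\<in>L. \<Prod>i<N. \<psi> ((t * sg i) * z!i) * \<omega> (z!i) powi (e i * int m))"
      by (simp add: sum_distrib_left)
    also have "(\<Sum>z\<in>L. \<Prod>i<N. \<psi> ((t * sg i) * z!i) * \<omega> (z!i) powi (e i * int m)) = (\<Prod>i<N. G t m i)"
      unfolding G_def by (rule list_prod_sum[where f="\<lambda>i a. \<psi> ((t * sg i) * a) * \<omega> a powi (e i * int m)"]) simp
    finally show "(\<Sum>z\<in>L. ?P t z * ?C m z) = \<omega> lam ^ m * (\<Prod>i<N. G t m i)" .
  qed
  finally show ?thesis .
qed

lemma G_zero_zero: "G 0 0 i = of_nat (card (UNIV::'a set) - 1)"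
  unfolding G_def using psi_zero[OF psi_add psi_nz] by (simp add: card_Diff_singleton)

lemma G_zero_vanish:
  assumes m: "0 < m" "m < card (UNIV::'a set) - 1"
  shows "\<exists>i<N. G 0 m i = 0"
proof (rule ccontr)
  assume "\<not> (\<exists>i<N. G 0 m i = 0)"
  then have nv: "\<And>i. i < N \<Longrightarrow> G 0 m i \<noteq> 0" by blast
  have Gc: "G 0 m i = (\<Sum>a\<in>UNIV - {0}. \<omega> a powi (e i * int m))" for i
    unfolding G_def using psi_zero[OF psi_add psi_nz] by simp
  have triv: "\<forall>x. x \<noteq> 0 \<longrightarrow> \<omega> x powi (e i * int m) = 1" if "i < N" for i
    using nv[OF that] unfolding Gc char_sum[OF omega_mult omega_nz] by (auto split: if_splits)
  have "\<forall>a\<in>set (ps @ qs). (card (UNIV::'a set) - 1) dvd a * m"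
  proof
    fix a assume "a \<in> set (ps @ qs)"
    then consider "a \<in> set ps" | "a \<in> set qs" by auto
    then show "(card (UNIV::'a set) - 1) dvd a * m"
    proof cases
      case 1
      then obtain i where i: "i < r" "a = ps!i" by (auto simp: in_set_conv_nth)
      have "\<forall>x. x \<noteq> 0 \<longrightarrow> \<omega> x powi (int (ps!i) * int m) = 1"
        using triv[of i] i by (simp add: e_def)
      then show ?thesis unfolding i(2) by (rule triv_pos[OF omega_gen, THEN iffD1])
    next
      case 2
      then obtain j where j: "j < s" "a = qs!j" by (auto simp: in_set_conv_nth)
      have "\<forall>x. x \<noteq> 0 \<longrightarrow> \<omega> x powi (- int (qs!j) * int m) = 1"
        using triv[of "r + j"] j by (simp add: e_def)
      then show ?thesis unfolding j(2) by (rule triv_neg[OF omega_gen, THEN iffD1])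
    qed
  qed
  then have "(card (UNIV::'a set) - 1) dvd m" by (rule gcd_arg[OF _ gcd1])
  then show False using m by (meson dvd_imp_le not_le)
qed

lemma t0_part:
  "(\<Sum>m<card (UNIV::'a set) - 1. \<omega> lam ^ m * (\<Prod>i<N. G 0 m i)) = of_nat (card (UNIV::'a set) - 1) ^ N"
proof -
  define k where "k = card (UNIV::'a set) - 2"
  have k: "card (UNIV::'a set) - 1 = Suc k" using Q_ge2 unfolding k_def by simp
  have "(\<Sum>m<card (UNIV::'a set) - 1. \<omega> lam ^ m * (\<Prod>i<N. G 0 m i))
      = \<omega> lam ^ 0 * (\<Prod>i<N. G 0 0 i) + (\<Sum>m<k. \<omega> lam ^ Suc m * (\<Prod>i<N. G 0 (Suc m) i))"
    unfolding k by (rule sum.lessThan_Suc_shift)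
  also have "(\<Sum>m<k. \<omega> lam ^ Suc m * (\<Prod>i<N. G 0 (Suc m) i)) = 0"
  proof (intro sum.neutral ballI)
    fix m assume "m \<in> {..<k}"
    then obtain i where "i < N" "G 0 (Suc m) i = 0" using G_zero_vanish[of "Suc m"] k by auto
    then have "(\<Prod>i<N. G 0 (Suc m) i) = 0" by (intro prod_zero) auto
    then show "\<omega> lam ^ Suc m * (\<Prod>i<N. G 0 (Suc m) i) = 0" by simp
  qed
  finally show ?thesis by (simp add: G_zero_zero)
qed

definition T :: "nat \<Rightarrow> complex" where
  "T m = (\<Prod>i<r. gsum \<psi> \<omega> (int (ps!i) * int m))
       * (\<Prod>j<s. gsum \<psi> \<omega> (- int (qs!j) * int m))
       * (\<omega> ((-1) ^ sum_list qs * lam)) ^ m"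

lemma tU_part:
  assumes t: "t \<noteq> 0"
  shows "\<omega> lam ^ m * (\<Prod>i<N. G t m i) = T m"
proof -
  have sgnz: "t * sg i \<noteq> 0" for i using t by (simp add: sg_def)
  have "G t m i = \<omega> (t * sg i) powi (- (e i * int m)) * gsum \<psi> \<omega> (e i * int m)" for i
    unfolding G_def by (rule gauss_shift[OF omega_mult omega_nz sgnz])
  then have "(\<Prod>i<N. G t m i) = (\<Prod>i<N. \<omega> (t * sg i) powi (- (e i * int m))) * (\<Prod>i<N. gsum \<psi> \<omega> (e i * int m))"
    by (simp add: prod.distrib)
  also have "(\<Prod>i<N. gsum \<psi> \<omega> (e i * int m)) =
      (\<Prod>i<r. gsum \<psi> \<omega> (int (ps!i) * int m)) * (\<Prod>j<s. gsum \<psi> \<omega> (- int (qs!j) * int m))"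
    unfolding split_prod by (simp add: e_def)
  also have "(\<Prod>i<N. \<omega> (t * sg i) powi (- (e i * int m))) = \<omega> (-1) ^ (sum_list qs * m)"
  proof -
    have tn: "\<omega> t \<noteq> 0" using omega_nz t by simp
    have m1: "\<omega> (-t) = \<omega> (-1) * \<omega> t" using omega_mult[rule_format, of "-1" t] t by simp
    have "(\<Prod>i<N. \<omega> (t * sg i) powi (- (e i * int m))) =
        (\<Prod>i<r. inverse (\<omega> t ^ (ps!i * m))) * (\<Prod>j<s. \<omega> (-t) ^ (qs!j * m))"
      unfolding split_prod
      by (simp add: sg_def e_def power_int_minus flip: of_nat_mult power_int_of_nat)
    also have "(\<Prod>i<r. inverse (\<omega> t ^ (ps!i * m))) = inverse (\<omega> t ^ (sum_list ps * m))"
      using prod_inversef[of "\<lambda>i. \<omega> t ^ (ps!i * m)" "{..<r}"]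
      by (simp add: comp_def power_sum[symmetric] sum_list_lt sum_distrib_right)
    also have "(\<Prod>j<s. \<omega> (-t) ^ (qs!j * m)) = \<omega> (-t) ^ (sum_list qs * m)"
      by (simp add: power_sum[symmetric] sum_list_lt sum_distrib_right)
    finally show ?thesis using tn unfolding sums m1 by (simp add: power_mult_distrib)
  qed
  finally have "\<omega> lam ^ m * (\<Prod>i<N. G t m i) = \<omega> lam ^ m * \<omega> (-1) ^ (sum_list qs * m) *
      ((\<Prod>i<r. gsum \<psi> \<omega> (int (ps!i) * int m)) * (\<Prod>j<s. gsum \<psi> \<omega> (- int (qs!j) * int m)))"
    by (simp add: mult.assoc)
  also have "\<omega> lam ^ m * \<omega> (-1) ^ (sum_list qs * m) = (\<omega> ((-1) ^ sum_list qs * lam)) ^ m"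
  proof -
    have "\<omega> ((-1) ^ sum_list qs * lam) = \<omega> ((-1) ^ sum_list qs) * \<omega> lam"
      using omega_mult[rule_format, of "(-1) ^ sum_list qs" lam] lam_nz by simp
    also have "\<omega> ((-1) ^ sum_list qs) = \<omega> (-1) ^ sum_list qs"
      by (rule omega_pow[OF omega_mult omega_nz]) simp
    finally have e1: "\<omega> ((-1) ^ sum_list qs * lam) = \<omega> (-1) ^ sum_list qs * \<omega> lam" .
    have "\<omega> (-1) ^ (sum_list qs * m) = (\<omega> (-1) ^ sum_list qs) ^ m" by (rule power_mult)
    then show ?thesis unfolding e1 power_mult_distrib by (simp only: mult.commute)
  qed
  finally show ?thesis unfolding T_def by (simp add: mult_ac)
qed

end


context setting begin

lemma final:
  "complex_of_nat (card (V_lambda lam ps qs)) =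
    (of_nat (card (UNIV::'a set)) - 1) ^ (length ps + length qs - 2) / of_nat (card (UNIV::'a set))
    + 1 / (of_nat (card (UNIV::'a set)) * (of_nat (card (UNIV::'a set)) - 1)) *
      (\<Sum>m = 0..(card (UNIV::'a set)) - 2.
         (\<Prod>i<length ps. gsum \<psi> \<omega> (int (ps!i) * int m))
       * (\<Prod>j<length qs. gsum \<psi> \<omega> (- int (qs!j) * int m))
       * (\<omega> ((-1) ^ sum_list qs * lam)) ^ m)"
proof -
  let ?Q = "card (UNIV::'a set)"
  define q where "q = (of_nat ?Q :: complex)"
  define n where "n = (of_nat ?Q - 1 :: complex)"
  have nQ: "of_nat (?Q - 1) = n" unfolding n_def using Q_ge2 by (simp add: of_nat_diff)
  have qnz: "q \<noteq> 0" unfolding q_def using Q_ge2 by simp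
  have nnz: "n \<noteq> 0" using nQ Q_ge2 by (metis of_nat_eq_0_iff diff_is_0_eq not_numeral_le_zero one_le_numeral le_trans Suc_1 not_less_eq_eq)
  have rng: "{0..?Q - 2} = {..<?Q - 1}" using Q_ge2 by auto
  define S where "S = (\<Sum>m<?Q - 1. T m)"
  define F where "F t = (\<Sum>m<?Q - 1. \<omega> lam ^ m * (\<Prod>i<N. G t m i))" for t
  have "(\<Sum>t\<in>UNIV. F t) = F 0 + (\<Sum>t\<in>UNIV - {0}. F t)"
    by (rule sum.remove) auto
  also have "F 0 = n ^ N" unfolding F_def t0_part nQ ..
  also have "(\<Sum>t\<in>UNIV - {0}. F t) = (\<Sum>t\<in>UNIV - {0::'a}. S)"
    by (intro sum.cong refl) (simp add: F_def S_def tU_part)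
  also have "\<dots> = n * S" using nQ by (simp add: card_Diff_singleton)
  finally have sumF: "(\<Sum>t\<in>UNIV. F t) = n ^ N + n * S" .
  have "of_nat (card (V_aff lam ps qs)) = 1 / (q * n) * (n ^ N + n * S)"
    using card_sum unfolding F_def[symmetric] sumF nQ q_def .
  moreover have "card (V_aff lam ps qs) = (?Q - 1) * card (V_lambda lam ps qs)"
    by (rule card_Vaff[OF sums]) (use r_pos in simp)
  ultimately have "n * of_nat (card (V_lambda lam ps qs)) = 1 / (q * n) * (n ^ N + n * S)"
    using nQ by (metis of_nat_mult)
  then have cV: "of_nat (card (V_lambda lam ps qs)) = 1 / (q * n) * (n ^ N + n * S) / n"
    using nnz qnz by (simp add: field_simps)
  have N2: "N = Suc (Suc (N - 2))" using r_pos s_pos by simp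
  have "n ^ N = n ^ (N - 2) * n * n" by (subst N2) (simp add: mult_ac)
  then have "of_nat (card (V_lambda lam ps qs)) = n ^ (N - 2) / q + 1 / (q * n) * S"
    unfolding cV using nnz qnz by (simp add: field_simps)
  then show ?thesis unfolding rng S_def T_def q_def n_def .
qed

end

theorem mainTheorem12:
  fixes \<psi> \<omega> :: "'a::{field,finite} \<Rightarrow> complex"
    and ps qs :: "nat list" and lam :: 'a
  assumes psi_add: "\<forall>x y. \<psi> (x + y) = \<psi> x * \<psi> y"
    and psi_nz: "\<forall>x. \<psi> x \<noteq> 0"
    and psi_nontriv: "\<exists>x. \<psi> x \<noteq> 1"
    and omega_mult: "\<forall>x y. x \<noteq> 0 \<longrightarrow> y \<noteq> 0 \<longrightarrow> \<omega> (x * y) = \<omega> x * \<omega> y"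
    and omega_nz: "\<forall>x. x \<noteq> 0 \<longrightarrow> \<omega> x \<noteq> 0"
    and omega_gen: "\<forall>k::nat. (\<forall>x. x \<noteq> 0 \<longrightarrow> \<omega> x ^ k = 1) \<longleftrightarrow> ((card (UNIV::'a set)) - 1) dvd k"
    and ps_pos: "\<forall>a\<in>set ps. a > 0"
    and qs_pos: "\<forall>b\<in>set qs. b > 0"
    and sums: "sum_list ps = sum_list qs"
    and gcd1: "Gcd (set (ps @ qs)) = 1"
    and lam_nz: "lam \<noteq> 0"
  shows "complex_of_nat (card (V_lambda lam ps qs)) =
    (of_nat (card (UNIV::'a set)) - 1) ^ (length ps + length qs - 2) / of_nat (card (UNIV::'a set))
    + 1 / (of_nat (card (UNIV::'a set)) * (of_nat (card (UNIV::'a set)) - 1)) *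
      (\<Sum>m = 0..(card (UNIV::'a set)) - 2.
         (\<Prod>i<length ps. gsum \<psi> \<omega> (int (ps!i) * int m))
       * (\<Prod>j<length qs. gsum \<psi> \<omega> (- int (qs!j) * int m))
       * (\<omega> ((-1) ^ sum_list qs * lam)) ^ m)"
proof -
  interpret setting \<psi> \<omega> ps qs lam
    by (rule setting.intro[OF psi_add psi_nz psi_nontriv omega_mult omega_nz omega_gen ps_pos qs_pos sums gcd1 lam_nz])
  show ?thesis by (rule final)
qed

end
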